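(* Let $G\in\mathcal{C}$ and let $N,N'$ be distinct normal subgroups of $G$. If $(H,H,\vartheta)\in\mathcal{L}_N$ and $(H',H',\vartheta')\in\mathcal{L}_{N'}$, then the Shoda pairs $(H,\ker\vartheta)$ and $(H',\ker\vartheta')$ of $G$ are not equivalent, i.e. they do not realize the same primitive central idempotent of $\mathbb{Q}G$.
   Context: All groups are finite. $\mathcal{C}$ is the class of finite groups $G$ such that every subgroup and quotient group of $G$ is either abelian or contains a non-central abelian normal subgroup. $\psi^x(g)=\psi(xgx^{-1})$, $\psi^G$ induced character, $1_N$ trivial character. A Shoda pair of $G$ is $(H,K)$ with $K\unlhd H\le G$, $H/K$ cyclic, and $g\in G$, $[H,g]\cap H\subseteq K$ imply $g\in H$; it realizes the primitive central idempotent $e_{\mathbb{Q}}(\psi^G)$ where $\psi$ is a linear character of $H$ with kernel $K$ and $e_{\mathbb{Q}}(\chi)=\frac{\chi(1)}{|G|}\sum_{\sigma\in\operatorname{Gal}(\mathbb{Q}(\chi)/\mathbb{Q})}\sum_{g\in G}\sigma(\chi(g))g^{-1}$. An $N$-linear character triple of $G$ is $(H,A,\vartheta)$ with $H\le G$, $A\unlhd H$, $\vartheta$ a linear character of $A$ invariant in $H$, and $\ker(\vartheta^G)=N$. For $B\unlhd M\le G$ and linear $\lambda$ on $B$, $\widetilde{\operatorname{Lin}}(M|\lambda)$ is the set of linear characters of $M$ whose restriction to $B$ contains $\lambda$ and whose induction to $G$ has kernel $N$. For each triple a normal subgroup $\mathcal{A}=\mathcal{A}_{(H,A,\vartheta)}$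 of $H$ is fixed, of maximal order among normal subgroups of $H$ containing $\ker\vartheta$ with abelian quotient by $\ker\vartheta$. $\operatorname{Aut}(\mathbb{C}|\vartheta)\times H$ acts on $\widetilde{\operatorname{Lin}}(\mathcal{A}|\vartheta)$ by $(\sigma,h)\cdot\varphi=\sigma\circ\varphi^h$ ($\sigma$ a field automorphism of $\mathbb{C}$ fixing $\mathbb{Q}(\vartheta)$); fix orbit representatives $\mathfrak{Lin}(\mathcal{A}|\vartheta)$. If $H\neq A$, $Cl(H,A,\vartheta)=\{(I_H(\varphi),\mathcal{A},\varphi):\varphi\in\mathfrak{Lin}(\mathcal{A}|\vartheta)\}$, $I_H(\varphi)=\{h\in H:\varphi^h=\varphi\}$; if $H=A$, empty. $\mathcal{G}_N$ is the directed graph of $N$-linear triples reachable from $(G,N,1_N)$, with edges $(u,v)$ whenever $v\in Cl(u)$. $\mathcal{L}_N$ is the set of vertices of $\mathcal{G}_N$ of the form $(H,H,\vartheta)$; for these $(H,\ker\vartheta)$ is a Shoda pair of $G$. *)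

theory Defs
  imports Complex_Main "HOL-Algebra.Coset" "HOL-Library.FuncSet"
begin

definition ab_or_nc_abnormal :: "('b, 'c) monoid_scheme \<Rightarrow> bool" where
  "ab_or_nc_abnormal X \<longleftrightarrow> comm_group X \<or>
     (\<exists>A. normal A X \<and> (\<forall>a\<in>A. \<forall>b\<in>A. a \<otimes>\<^bsub>X\<^esub> b = b \<otimes>\<^bsub>X\<^esub> a)
          \<and> (\<exists>a\<in>A. \<exists>x\<in>carrier X. a \<otimes>\<^bsub>X\<^esub> x \<noteq> x \<otimes>\<^bsub>X\<^esub> a))"

definition class_C :: "'a monoid \<Rightarrow> bool" where
  "class_C G \<longleftrightarrow>
     (\<forall>K. subgroup K G \<longrightarrow> ab_or_nc_abnormal (G\<lparr>carrier := K\<rparr>)) \<and>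
     (\<forall>M. normal M G \<longrightarrow> ab_or_nc_abnormal (G Mod M))"

section \<open>Characters (functions on the group, zero outside their domain)\<close>

definition linear_char :: "'a monoid \<Rightarrow> 'a set \<Rightarrow> ('a \<Rightarrow> complex) \<Rightarrow> bool" where
  "linear_char G A \<theta> \<longleftrightarrow>
     (\<forall>x\<in>A. \<forall>y\<in>A. \<theta> (x \<otimes>\<^bsub>G\<^esub> y) = \<theta> x * \<theta> y) \<and>
     (\<forall>x\<in>A. \<theta> x \<noteq> 0) \<and> (\<forall>x. x \<notin> A \<longrightarrow> \<theta> x = 0)"

definition lin_ker :: "'a set \<Rightarrow> ('a \<Rightarrow> complex) \<Rightarrow> 'a set" where
  "lin_ker A \<theta> = {a\<in>A. \<theta> a = 1}"

text \<open>Induced class function psi^G, psi being zero outside H.\<close>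
definition induced :: "'a monoid \<Rightarrow> 'a set \<Rightarrow> ('a \<Rightarrow> complex) \<Rightarrow> 'a \<Rightarrow> complex" where
  "induced G H \<psi> g = (if g \<in> carrier G then
      (1 / of_nat (card H)) * (\<Sum>x\<in>carrier G. \<psi> (x \<otimes>\<^bsub>G\<^esub> g \<otimes>\<^bsub>G\<^esub> inv\<^bsub>G\<^esub> x)) else 0)"

definition char_ker :: "'a monoid \<Rightarrow> ('a \<Rightarrow> complex) \<Rightarrow> 'a set" where
  "char_ker G \<chi> = {g\<in>carrier G. \<chi> g = \<chi> \<one>\<^bsub>G\<^esub>}"

definition one_char :: "'a set \<Rightarrow> 'a \<Rightarrow> complex" where
  "one_char N = (\<lambda>x. if x \<in> N then 1 else 0)"

definition is_subfield :: "complex set \<Rightarrow> bool" where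
  "is_subfield F \<longleftrightarrow> 0 \<in> F \<and> 1 \<in> F \<and>
     (\<forall>x\<in>F. \<forall>y\<in>F. x + y \<in> F \<and> x - y \<in> F \<and> x * y \<in> F) \<and> (\<forall>x\<in>F. inverse x \<in> F)"

definition gen_field :: "complex set \<Rightarrow> complex set" where
  "gen_field S = \<Inter>{F. is_subfield F \<and> S \<subseteq> F}"

definition field_aut :: "complex set \<Rightarrow> (complex \<Rightarrow> complex) \<Rightarrow> bool" where
  "field_aut F \<sigma> \<longleftrightarrow> \<sigma> \<in> extensional F \<and> bij_betw \<sigma> F F \<and> \<sigma> 1 = 1 \<and>
     (\<forall>x\<in>F. \<forall>y\<in>F. \<sigma> (x + y) = \<sigma> x + \<sigma> y \<and> \<sigma> (x * y) = \<sigma> x * \<sigma> y)"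

definition char_gal :: "'a monoid \<Rightarrow> ('a \<Rightarrow> complex) \<Rightarrow> (complex \<Rightarrow> complex) set" where
  "char_gal G \<chi> = {\<sigma>. field_aut (gen_field (\<chi> ` carrier G)) \<sigma>}"

text \<open>e_Q(chi) as an element of QG, i.e. its coefficient function on G
  (the coefficient of h is the summand with g^{-1} = h, i.e. g = h^{-1}).\<close>
definition eQ :: "'a monoid \<Rightarrow> ('a \<Rightarrow> complex) \<Rightarrow> 'a \<Rightarrow> complex" where
  "eQ G \<chi> = (\<lambda>h. if h \<in> carrier G then
      \<chi> \<one>\<^bsub>G\<^esub> / of_nat (card (carrier G)) *
        (\<Sum>\<sigma>\<in>char_gal G \<chi>. \<sigma> (\<chi> (inv\<^bsub>G\<^esub> h))) else 0)"

type_synonym 'a triple = "'a set \<times> 'a set \<times> ('a \<Rightarrow> complex)"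

definition lin_triple :: "'a monoid \<Rightarrow> 'a triple \<Rightarrow> bool" where
  "lin_triple G t = (case t of (H, A, \<theta>) \<Rightarrow>
     subgroup H G \<and> normal A (G\<lparr>carrier := H\<rparr>) \<and> linear_char G A \<theta> \<and>
     (\<forall>h\<in>H. \<forall>a\<in>A. \<theta> (h \<otimes>\<^bsub>G\<^esub> a \<otimes>\<^bsub>G\<^esub> inv\<^bsub>G\<^esub> h) = \<theta> a))"

definition N_lin_triple :: "'a monoid \<Rightarrow> 'a set \<Rightarrow> 'a triple \<Rightarrow> bool" where
  "N_lin_triple G N t \<longleftrightarrow> lin_triple G t \<and>
     (case t of (H, A, \<theta>) \<Rightarrow> char_ker G (induced G A \<theta>) = N)"

definition A_cand :: "'a monoid \<Rightarrow> 'a triple \<Rightarrow> 'a set \<Rightarrow> bool" where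
  "A_cand G t K = (case t of (H, A, \<theta>) \<Rightarrow>
     normal K (G\<lparr>carrier := H\<rparr>) \<and> lin_ker A \<theta> \<subseteq> K \<and>
     comm_group ((G\<lparr>carrier := K\<rparr>) Mod (lin_ker A \<theta>)))"

text \<open>Acal is an admissible choice of \<A>_t for every linear triple t: a candidate of maximal order.\<close>
definition Acal_ok :: "'a monoid \<Rightarrow> ('a triple \<Rightarrow> 'a set) \<Rightarrow> bool" where
  "Acal_ok G Acal \<longleftrightarrow> (\<forall>t. lin_triple G t \<longrightarrow>
     A_cand G t (Acal t) \<and> (\<forall>K. A_cand G t K \<longrightarrow> card K \<le> card (Acal t)))"

definition Lin_tilde :: "'a monoid \<Rightarrow> ('a triple \<Rightarrow> 'a set) \<Rightarrow> 'a triple \<Rightarrow> ('a \<Rightarrow> complex) set" where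
  "Lin_tilde G Acal t = (case t of (H, A, \<theta>) \<Rightarrow>
     {\<phi>. linear_char G (Acal t) \<phi> \<and> (\<forall>a\<in>A. \<phi> a = \<theta> a) \<and>
          char_ker G (induced G (Acal t) \<phi>) = char_ker G (induced G A \<theta>)})"

text \<open>psi is in the orbit of phi under Aut(C|theta) x H, acting by (sigma,h).phi = sigma o phi^h,
  where phi^h(g) = phi(h g h^{-1}).\<close>
definition orbit_rel :: "'a monoid \<Rightarrow> ('a triple \<Rightarrow> 'a set) \<Rightarrow> 'a triple \<Rightarrow>
    ('a \<Rightarrow> complex) \<Rightarrow> ('a \<Rightarrow> complex) \<Rightarrow> bool" where
  "orbit_rel G Acal t \<phi> \<psi> = (case t of (H, A, \<theta>) \<Rightarrow>
     \<exists>\<sigma> h. field_aut UNIV \<sigma> \<and> (\<forall>z\<in>gen_field (\<theta> ` A). \<sigma> z = z) \<and> h \<in> H \<and>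
        (\<forall>a\<in>Acal t. \<psi> a = \<sigma> (\<phi> (h \<otimes>\<^bsub>G\<^esub> a \<otimes>\<^bsub>G\<^esub> inv\<^bsub>G\<^esub> h))))"

text \<open>Rep t is a fixed set of orbit representatives \<frak>Lin(\<A>|theta).\<close>
definition Rep_ok :: "'a monoid \<Rightarrow> ('a triple \<Rightarrow> 'a set) \<Rightarrow> ('a triple \<Rightarrow> ('a \<Rightarrow> complex) set) \<Rightarrow> bool" where
  "Rep_ok G Acal Rep \<longleftrightarrow> (\<forall>t. lin_triple G t \<longrightarrow>
     Rep t \<subseteq> Lin_tilde G Acal t \<and>
     (\<forall>\<phi>\<in>Lin_tilde G Acal t. \<exists>!\<rho>. \<rho> \<in> Rep t \<and> orbit_rel G Acal t \<rho> \<phi>))"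

definition stab :: "'a monoid \<Rightarrow> 'a set \<Rightarrow> 'a set \<Rightarrow> ('a \<Rightarrow> complex) \<Rightarrow> 'a set" where
  "stab G H M \<phi> = {h\<in>H. \<forall>a\<in>M. \<phi> (h \<otimes>\<^bsub>G\<^esub> a \<otimes>\<^bsub>G\<^esub> inv\<^bsub>G\<^esub> h) = \<phi> a}"

definition Cl :: "'a monoid \<Rightarrow> ('a triple \<Rightarrow> 'a set) \<Rightarrow> ('a triple \<Rightarrow> ('a \<Rightarrow> complex) set) \<Rightarrow>
    'a triple \<Rightarrow> 'a triple set" where
  "Cl G Acal Rep t = (case t of (H, A, \<theta>) \<Rightarrow>
     if H = A then {} else (\<lambda>\<phi>. (stab G H (Acal t) \<phi>, Acal t, \<phi>)) ` Rep t)"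

inductive_set graph_vertices :: "'a monoid \<Rightarrow> ('a triple \<Rightarrow> 'a set) \<Rightarrow>
    ('a triple \<Rightarrow> ('a \<Rightarrow> complex) set) \<Rightarrow> 'a set \<Rightarrow> 'a triple set"
  for G Acal Rep N where
  root: "(carrier G, N, one_char N) \<in> graph_vertices G Acal Rep N"
| step: "u \<in> graph_vertices G Acal Rep N \<Longrightarrow> v \<in> Cl G Acal Rep u \<Longrightarrow> v \<in> graph_vertices G Acal Rep N"

definition L_set :: "'a monoid \<Rightarrow> ('a triple \<Rightarrow> 'a set) \<Rightarrow>
    ('a triple \<Rightarrow> ('a \<Rightarrow> complex) set) \<Rightarrow> 'a set \<Rightarrow> 'a triple set" where
  "L_set G Acal Rep N = {(H, A, \<theta>) \<in> graph_vertices G Acal Rep N. H = A}"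

text \<open>Primitive central idempotents of QG realized by the Shoda pair (H,K).\<close>
definition shoda_idem :: "'a monoid \<Rightarrow> 'a set \<Rightarrow> 'a set \<Rightarrow> ('a \<Rightarrow> complex) set" where
  "shoda_idem G H K = {eQ G (induced G H \<psi>) | \<psi>. linear_char G H \<psi> \<and> lin_ker H \<psi> = K}"

end

theory Submission
  imports Defs "HOL-Algebra.Multiplicative_Group" "Jordan_Normal_Form.Char_Poly"
begin


locale grp = group G for G :: "'a monoid" (structure)

lemma sum_norm_eq:
  fixes f :: "'b \<Rightarrow> complex" and d :: real
  assumes fin: "finite S" and b: "\<And>i. i \<in> S \<Longrightarrow> cmod (f i) \<le> d"
    and s: "sum f S = of_nat (card S) * of_real d"
  shows "\<forall>i\<in>S. f i = of_real d"
proof -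
  have re: "\<And>i. i \<in> S \<Longrightarrow> Re (f i) \<le> d" using b complex_Re_le_cmod order_trans by blast
  have "Re (sum f S) = of_nat (card S) * d" using s by simp
  then have "(\<Sum>i\<in>S. Re (f i)) = (\<Sum>i\<in>S. d)" by simp
  then have "(\<Sum>i\<in>S. d - Re (f i)) = 0" by (simp add: sum_subtractf)
  moreover have "\<forall>i\<in>S. 0 \<le> d - Re (f i)"
  proof
    fix i assume "i \<in> S" then show "0 \<le> d - Re (f i)" using re[of i] by linarith
  qed
  ultimately have z: "\<forall>i\<in>S. d - Re (f i) = 0"
    using sum_nonneg_eq_0_iff[OF fin, of "\<lambda>i. d - Re (f i)"] by metis
  show ?thesis
  proof
    fix i assume i: "i \<in> S"
    have r: "Re (f i) = d" using z i by simp
    have c: "(cmod (f i))\<^sup>2 = (Re (f i))\<^sup>2 + (Im (f i))\<^sup>2" by (simp add: cmod_power2)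
    have "cmod (f i) \<le> d" using b i .
    then have "(cmod (f i))\<^sup>2 \<le> d\<^sup>2" by (simp add: power_mono)
    then have "(Im (f i))\<^sup>2 \<le> 0" using r c by simp
    then have "Im (f i) = 0" by simp
    then show "f i = of_real d" using r by (simp add: complex_eq_iff)
  qed
qed

lemma (in grp) lin_one:
  assumes "subgroup H G" "linear_char G H \<psi>"
  shows "\<psi> \<one> = 1"
proof -
  have h: "\<one> \<in> H" using assms(1) subgroup.one_closed by blast
  have "\<psi> \<one> = \<psi> \<one> * \<psi> \<one>" using assms(2) h unfolding linear_char_def
    by (metis l_one subgroup.mem_carrier[OF assms(1) h])
  moreover have "\<psi> \<one> \<noteq> 0" using assms(2) h unfolding linear_char_def by blast
  ultimately show ?thesis by (metis mult_cancel_left1)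
qed

lemma (in grp) lin_pow:
  assumes "subgroup H G" "linear_char G H \<psi>" "x \<in> H"
  shows "\<psi> (x [^] (k::nat)) = \<psi> x ^ k"
proof (induction k)
  case 0 then show ?case using lin_one[OF assms(1-2)] by simp
next
  case (Suc k)
  have "x [^] Suc k = x [^] k \<otimes> x" by simp
  moreover have "x [^] k \<in> H"
  proof (induction k)
    case 0 then show ?case using assms(1) subgroup.one_closed by simp
  next
    case (Suc k) then show ?case using assms(1,3) subgroup.m_closed by simp
  qed
  ultimately have "\<psi> (x [^] Suc k) = \<psi> (x [^] k) * \<psi> x"
    using assms(2,3) unfolding linear_char_def by metis
  then show ?case using Suc.IH by (metis power_Suc2)
qed

lemma (in grp) lin_norm1:
  assumes "finite (carrier G)" "subgroup H G" "linear_char G H \<psi>" "x \<in> H"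
  shows "cmod (\<psi> x) = 1"
proof -
  have xc: "x \<in> carrier G" by (rule subgroup.mem_carrier[OF assms(2,4)])
  have a: "\<psi> (x [^] Coset.order G) = \<psi> x ^ Coset.order G" by (rule lin_pow[OF assms(2,3,4)])
  have b: "x [^] Coset.order G = \<one>" by (rule pow_order_eq_1[OF xc])
  have "\<psi> x ^ Coset.order G = 1" using a b lin_one[OF assms(2,3)] by metis
  then have c: "cmod (\<psi> x) ^ Coset.order G = 1 ^ Coset.order G" by (metis norm_one norm_power power_one)
  have "Coset.order G > 0" unfolding Coset.order_def by (metis assms(1) card_gt_0_iff empty_iff xc)
  then show ?thesis using power_eq_imp_eq_base[OF c] by simp
qed

lemma (in grp) lin_norm:
  assumes "finite (carrier G)" "subgroup H G" "linear_char G H \<psi>"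
  shows "cmod (\<psi> x) \<le> 1"
  using lin_norm1[OF assms] assms(3) unfolding linear_char_def by (cases "x \<in> H") auto


lemma (in grp) cardH_pos:
  assumes "finite (carrier G)" "subgroup H G"
  shows "card H > 0"
proof -
  have "H \<subseteq> carrier G" by (rule subgroup.subset[OF assms(2)])
  then have "finite H" using assms(1) finite_subset by blast
  moreover have "\<one> \<in> H" by (rule subgroup.one_closed[OF assms(2)])
  ultimately show ?thesis by (metis card_gt_0_iff empty_iff)
qed

lemma (in grp) induced_eq:
  assumes "g \<in> carrier G" "card H > 0"
  shows "of_nat (card H) * induced G H \<psi> g = (\<Sum>x\<in>carrier G. \<psi> (x \<otimes> g \<otimes> inv x))"
  using assms unfolding induced_def by simp

lemma (in grp) induced_one:
  assumes "finite (carrier G)" "subgroup H G" "linear_char G H \<psi>"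
  shows "of_nat (card H) * induced G H \<psi> \<one> = of_nat (card (carrier G))"
proof -
  have "\<And>x. x \<in> carrier G \<Longrightarrow> \<psi> (x \<otimes> \<one> \<otimes> inv x) = 1"
  proof -
    fix x assume x: "x \<in> carrier G"
    then have "x \<otimes> \<one> \<otimes> inv x = \<one>" by simp
    then show "\<psi> (x \<otimes> \<one> \<otimes> inv x) = 1" using lin_one[OF assms(2,3)] by simp
  qed
  then have "(\<Sum>x\<in>carrier G. \<psi> (x \<otimes> \<one> \<otimes> inv x)) = of_nat (card (carrier G))"
    by simp
  then show ?thesis using induced_eq[OF one_closed cardH_pos[OF assms(1,2)]] by simp
qed

lemma (in grp) ker_core:
  assumes fin: "finite (carrier G)" and H: "subgroup H G" and psi: "linear_char G H \<psi>"
  shows "char_ker G (induced G H \<psi>) = {g\<in>carrier G. \<forall>x\<in>carrier G. x \<otimes> g \<otimes> inv x \<in> lin_ker H \<psi>}"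
proof (intro equalityI subsetI)
  have cp: "card H > 0" by (rule cardH_pos[OF fin H])
  have cpc: "(of_nat (card H) :: complex) \<noteq> 0" using cp by simp
  fix g assume "g \<in> char_ker G (induced G H \<psi>)"
  then have g: "g \<in> carrier G" and e: "induced G H \<psi> g = induced G H \<psi> \<one>"
    unfolding char_ker_def by auto
  have "(\<Sum>x\<in>carrier G. \<psi> (x \<otimes> g \<otimes> inv x)) = of_nat (card (carrier G)) * of_real 1"
    using induced_eq[OF g cp, of \<psi>] induced_one[OF fin H psi] e by simp
  then have all: "\<forall>x\<in>carrier G. \<psi> (x \<otimes> g \<otimes> inv x) = of_real 1"
    using sum_norm_eq[OF fin, of "\<lambda>x. \<psi> (x \<otimes> g \<otimes> inv x)" 1] lin_norm[OF fin H psi] by blast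
  have "\<forall>x\<in>carrier G. x \<otimes> g \<otimes> inv x \<in> lin_ker H \<psi>"
  proof
    fix x assume x: "x \<in> carrier G"
    have v: "\<psi> (x \<otimes> g \<otimes> inv x) = 1" using all x by simp
    then have "x \<otimes> g \<otimes> inv x \<in> H" using psi unfolding linear_char_def by (metis zero_neq_one)
    then show "x \<otimes> g \<otimes> inv x \<in> lin_ker H \<psi>" using v unfolding lin_ker_def by simp
  qed
  then show "g \<in> {g\<in>carrier G. \<forall>x\<in>carrier G. x \<otimes> g \<otimes> inv x \<in> lin_ker H \<psi>}" using g by simp
next
  have cp: "card H > 0" by (rule cardH_pos[OF fin H])
  fix g assume "g \<in> {g\<in>carrier G. \<forall>x\<in>carrier G. x \<otimes> g \<otimes> inv x \<in> lin_ker H \<psi>}"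
  then have g: "g \<in> carrier G" and all: "\<forall>x\<in>carrier G. x \<otimes> g \<otimes> inv x \<in> lin_ker H \<psi>" by auto
  have "\<forall>x\<in>carrier G. \<psi> (x \<otimes> g \<otimes> inv x) = 1" using all unfolding lin_ker_def by simp
  then have "(\<Sum>x\<in>carrier G. \<psi> (x \<otimes> g \<otimes> inv x)) = of_nat (card (carrier G))" by simp
  then have "of_nat (card H) * induced G H \<psi> g = of_nat (card H) * induced G H \<psi> \<one>"
    using induced_eq[OF g cp, of \<psi>] induced_one[OF fin H psi] by simp
  then have "induced G H \<psi> g = induced G H \<psi> \<one>" using cp by simp
  then show "g \<in> char_ker G (induced G H \<psi>)" using g unfolding char_ker_def by simp
qed


lemma (in grp) normal_sub_iff:
  assumes H: "subgroup H G"
  shows "normal A (G\<lparr>carrier := H\<rparr>) \<longleftrightarrow>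
    subgroup A G \<and> A \<subseteq> H \<and> (\<forall>x\<in>H. \<forall>a\<in>A. x \<otimes> a \<otimes> inv x \<in> A)"
proof -
  have gH: "group (G\<lparr>carrier := H\<rparr>)" by (rule subgroup_imp_group[OF H])
  have "normal A (G\<lparr>carrier := H\<rparr>) \<longleftrightarrow> subgroup A (G\<lparr>carrier := H\<rparr>) \<and>
     (\<forall>x\<in>carrier (G\<lparr>carrier := H\<rparr>). \<forall>h\<in>A. x \<otimes>\<^bsub>G\<lparr>carrier := H\<rparr>\<^esub> h \<otimes>\<^bsub>G\<lparr>carrier := H\<rparr>\<^esub> inv\<^bsub>G\<lparr>carrier := H\<rparr>\<^esub> x \<in> A)"
    by (rule group.normal_inv_iff[OF gH])
  also have "\<dots> \<longleftrightarrow> subgroup A (G\<lparr>carrier := H\<rparr>) \<and> (\<forall>x\<in>H. \<forall>a\<in>A. x \<otimes> a \<otimes> inv x \<in> A)"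
  proof -
    have "\<And>x. x \<in> H \<Longrightarrow> inv\<^bsub>G\<lparr>carrier := H\<rparr>\<^esub> x = inv x" by (rule m_inv_consistent[OF H])
    then show ?thesis by simp
  qed
  also have "subgroup A (G\<lparr>carrier := H\<rparr>) \<longleftrightarrow> subgroup A G \<and> A \<subseteq> H"
  proof
    assume a: "subgroup A (G\<lparr>carrier := H\<rparr>)"
    have "A \<subseteq> carrier (G\<lparr>carrier := H\<rparr>)" by (rule subgroup.subset[OF a])
    then show "subgroup A G \<and> A \<subseteq> H" using incl_subgroup[OF H a] by simp
  next
    assume "subgroup A G \<and> A \<subseteq> H"
    then show "subgroup A (G\<lparr>carrier := H\<rparr>)" using subgroup_incl[OF _ H] by blast
  qed
  finally show ?thesis by blast
qed

lemma (in grp) stab_sub: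
  assumes H: "subgroup H G" and M: "normal M (G\<lparr>carrier := H\<rparr>)"
    and phi: "linear_char G M \<phi>"
  shows "subgroup (stab G H M \<phi>) G" and "M \<subseteq> stab G H M \<phi>"
    and "normal M (G\<lparr>carrier := stab G H M \<phi>\<rparr>)"
proof -
  have MM: "subgroup M G" and MH: "M \<subseteq> H" and conj: "\<forall>x\<in>H. \<forall>a\<in>M. x \<otimes> a \<otimes> inv x \<in> M"
    using M unfolding normal_sub_iff[OF H] by auto
  have conjM: "\<And>x a. x \<in> H \<Longrightarrow> a \<in> M \<Longrightarrow> x \<otimes> a \<otimes> inv x \<in> M" using conj by blast
  have Hc: "H \<subseteq> carrier G" by (rule subgroup.subset[OF H])
  have Mc: "M \<subseteq> carrier G" using MH Hc by blast
  have Sc: "stab G H M \<phi> \<subseteq> H" unfolding stab_def by blast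
  show sub: "subgroup (stab G H M \<phi>) G"
  proof (rule subgroupI)
    show "stab G H M \<phi> \<subseteq> carrier G" using Sc Hc by blast
    have "\<one> \<in> stab G H M \<phi>"
      unfolding stab_def using subgroup.one_closed[OF H] Mc by (simp add: subset_iff)
    then show "stab G H M \<phi> \<noteq> {}" by blast
  next
    fix h assume h: "h \<in> stab G H M \<phi>"
    have hH: "h \<in> H" using h unfolding stab_def by blast
    have hc: "h \<in> carrier G" using hH Hc by blast
    have hs: "\<And>a. a \<in> M \<Longrightarrow> \<phi> (h \<otimes> a \<otimes> inv h) = \<phi> a" using h unfolding stab_def by blast
    have "\<forall>a\<in>M. \<phi> (inv h \<otimes> a \<otimes> inv (inv h)) = \<phi> a"
    proof
      fix a assume a: "a \<in> M"
      have ac: "a \<in> carrier G" using a Mc by blast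
      have ihH: "inv h \<in> H" by (rule subgroup.m_inv_closed[OF H hH])
      have b: "inv h \<otimes> a \<otimes> inv (inv h) \<in> M" by (rule conjM[OF ihH a])
      have "h \<otimes> (inv h \<otimes> a \<otimes> inv (inv h)) \<otimes> inv h = a"
        using hc ac by (simp add: m_assoc, simp add: m_assoc[symmetric])
      then show "\<phi> (inv h \<otimes> a \<otimes> inv (inv h)) = \<phi> a" using hs[OF b] by simp
    qed
    then show "inv h \<in> stab G H M \<phi>" unfolding stab_def using subgroup.m_inv_closed[OF H hH] by blast
  next
    fix h k assume h: "h \<in> stab G H M \<phi>" and k: "k \<in> stab G H M \<phi>"
    have hH: "h \<in> H" and kH: "k \<in> H" using h k unfolding stab_def by auto
    have hc: "h \<in> carrier G" and kc: "k \<in> carrier G" using hH kH Hc by auto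
    have hs: "\<And>a. a \<in> M \<Longrightarrow> \<phi> (h \<otimes> a \<otimes> inv h) = \<phi> a" using h unfolding stab_def by blast
    have ks: "\<And>a. a \<in> M \<Longrightarrow> \<phi> (k \<otimes> a \<otimes> inv k) = \<phi> a" using k unfolding stab_def by blast
    have "\<forall>a\<in>M. \<phi> (h \<otimes> k \<otimes> a \<otimes> inv (h \<otimes> k)) = \<phi> a"
    proof
      fix a assume a: "a \<in> M"
      have ac: "a \<in> carrier G" using a Mc by blast
      have b: "k \<otimes> a \<otimes> inv k \<in> M" by (rule conjM[OF kH a])
      have "h \<otimes> k \<otimes> a \<otimes> inv (h \<otimes> k) = h \<otimes> (k \<otimes> a \<otimes> inv k) \<otimes> inv h"
        using hc kc ac by (simp add: m_assoc inv_mult_group)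
      then show "\<phi> (h \<otimes> k \<otimes> a \<otimes> inv (h \<otimes> k)) = \<phi> a" using hs[OF b] ks[OF a] by simp
    qed
    then show "h \<otimes> k \<in> stab G H M \<phi>" unfolding stab_def using subgroup.m_closed[OF H hH kH] by blast
  qed
  show MS: "M \<subseteq> stab G H M \<phi>"
  proof
    fix b assume b: "b \<in> M"
    have bc: "b \<in> carrier G" using b Mc by blast
    have ib: "inv b \<in> M" by (rule subgroup.m_inv_closed[OF MM b])
    have one: "\<phi> b * \<phi> (inv b) = 1"
    proof -
      have "\<phi> (b \<otimes> inv b) = \<phi> b * \<phi> (inv b)" using phi b ib unfolding linear_char_def by blast
      moreover have "b \<otimes> inv b = \<one>" using bc by simp
      ultimately show ?thesis using lin_one[OF MM phi] by simp
    qed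
    have "\<forall>a\<in>M. \<phi> (b \<otimes> a \<otimes> inv b) = \<phi> a"
    proof
      fix a assume a: "a \<in> M"
      have ba: "b \<otimes> a \<in> M" by (rule subgroup.m_closed[OF MM b a])
      have "\<phi> (b \<otimes> a \<otimes> inv b) = \<phi> b * \<phi> a * \<phi> (inv b)"
        using phi a b ib ba unfolding linear_char_def by metis
      also have "\<dots> = \<phi> a * (\<phi> b * \<phi> (inv b))" by (simp add: algebra_simps)
      finally show "\<phi> (b \<otimes> a \<otimes> inv b) = \<phi> a" using one by simp
    qed
    then show "b \<in> stab G H M \<phi>" unfolding stab_def using b MH by blast
  qed
  show "normal M (G\<lparr>carrier := stab G H M \<phi>\<rparr>)"
    unfolding normal_sub_iff[OF sub] using MM MS conjM Sc by blast
qed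


lemma (in grp) vert_inv:
  assumes fin: "finite (carrier G)" and N: "normal N G"
    and Aok: "Acal_ok G Acal" and Rok: "Rep_ok G Acal Rep"
    and v: "v \<in> graph_vertices G Acal Rep N"
  shows "lin_triple G v \<and> (case v of (H, A, \<theta>) \<Rightarrow> char_ker G (induced G A \<theta>) = N)"
  using v
proof (induction rule: graph_vertices.induct)
  case root
  have NG: "subgroup N G" by (rule normal_imp_subgroup[OF N])
  have Nc: "N \<subseteq> carrier G" by (rule subgroup.subset[OF NG])
  have conj: "\<And>x h. x \<in> carrier G \<Longrightarrow> h \<in> N \<Longrightarrow> x \<otimes> h \<otimes> inv x \<in> N"
    using N normal_inv_iff by blast
  have lc: "linear_char G N (one_char N)"
    unfolding linear_char_def one_char_def using subgroup.m_closed[OF NG] by simp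
  have nrm: "normal N (G\<lparr>carrier := carrier G\<rparr>)"
    unfolding normal_sub_iff[OF subgroup_self] using NG Nc conj by blast
  have lt: "lin_triple G (carrier G, N, one_char N)"
    unfolding lin_triple_def using subgroup_self nrm lc conj
    by (simp add: one_char_def)
  have lk: "lin_ker N (one_char N) = N" unfolding lin_ker_def one_char_def by simp
  have "char_ker G (induced G N (one_char N)) = N"
  proof -
    have "char_ker G (induced G N (one_char N)) = {g\<in>carrier G. \<forall>x\<in>carrier G. x \<otimes> g \<otimes> inv x \<in> N}"
      using ker_core[OF fin NG lc] lk by simp
    also have "\<dots> = N"
    proof (intro equalityI subsetI)
      fix g assume "g \<in> {g\<in>carrier G. \<forall>x\<in>carrier G. x \<otimes> g \<otimes> inv x \<in> N}"
      then have g: "g \<in> carrier G" and a: "\<forall>x\<in>carrier G. x \<otimes> g \<otimes> inv x \<in> N" by auto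
      have "\<one> \<otimes> g \<otimes> inv \<one> \<in> N" using a one_closed by blast
      then show "g \<in> N" using g by simp
    next
      fix g assume "g \<in> N"
      then show "g \<in> {g\<in>carrier G. \<forall>x\<in>carrier G. x \<otimes> g \<otimes> inv x \<in> N}" using conj Nc by blast
    qed
    finally show ?thesis .
  qed
  then show ?case using lt by simp
next
  case (step u v)
  obtain H A \<theta> where u: "u = (H, A, \<theta>)" by (cases u) auto
  have ltu: "lin_triple G u" and ku: "char_ker G (induced G A \<theta>) = N" using step.IH u by auto
  have H: "subgroup H G" using ltu u unfolding lin_triple_def by simp
  have HA: "H \<noteq> A" and "v \<in> (\<lambda>\<phi>. (stab G H (Acal u) \<phi>, Acal u, \<phi>)) ` Rep u"
    using step.hyps(2) u unfolding Cl_def by (auto split: if_splits)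
  then obtain \<phi> where ph: "\<phi> \<in> Rep u" and v: "v = (stab G H (Acal u) \<phi>, Acal u, \<phi>)" by blast
  have "\<phi> \<in> Lin_tilde G Acal u" using Rok ltu ph unfolding Rep_ok_def by blast
  then have lc: "linear_char G (Acal u) \<phi>" and kv: "char_ker G (induced G (Acal u) \<phi>) = char_ker G (induced G A \<theta>)"
    unfolding Lin_tilde_def u by auto
  have "A_cand G u (Acal u)" using Aok ltu unfolding Acal_ok_def by blast
  then have M: "normal (Acal u) (G\<lparr>carrier := H\<rparr>)" unfolding A_cand_def u by simp
  have "lin_triple G v" unfolding v lin_triple_def
    using stab_sub[OF H M lc] lc unfolding stab_def by auto
  then show ?case using v kv ku by simp
qed



lemma subfield_UNIV: "is_subfield UNIV" unfolding is_subfield_def by simp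

lemma gen_field_sub: "is_subfield (gen_field S)"
  unfolding is_subfield_def gen_field_def by (auto simp: is_subfield_def)

lemma gen_field_incl: "S \<subseteq> gen_field S"
  unfolding gen_field_def by blast

lemma gen_field_min: "is_subfield E \<Longrightarrow> S \<subseteq> E \<Longrightarrow> gen_field S \<subseteq> E"
  unfolding gen_field_def by blast

lemma subfield_nat: "is_subfield F \<Longrightarrow> of_nat k \<in> F"
proof (induction k)
  case 0 then show ?case unfolding is_subfield_def by simp
next
  case (Suc k)
  then have "of_nat k + 1 \<in> F" unfolding is_subfield_def by blast
  then show ?case by (simp add: add.commute)
qed

lemma subfield_int: "is_subfield F \<Longrightarrow> of_int k \<in> F"
proof (cases "k \<ge> 0")
  case True
  assume F: "is_subfield F"
  have "of_nat (nat k) \<in> F" by (rule subfield_nat[OF F])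
  then show ?thesis using True by simp
next
  case False
  assume F: "is_subfield F"
  have a: "of_nat (nat (-k)) \<in> F" by (rule subfield_nat[OF F])
  have "0 \<in> F" using F unfolding is_subfield_def by blast
  then have "0 - of_nat (nat (-k)) \<in> F" using a F unfolding is_subfield_def by blast
  then show ?thesis using False by simp
qed

lemma subfield_div: "is_subfield F \<Longrightarrow> x \<in> F \<Longrightarrow> y \<in> F \<Longrightarrow> x / y \<in> F"
  unfolding is_subfield_def divide_inverse by blast

locale fauto =
  fixes F :: "complex set" and \<sigma> :: "complex \<Rightarrow> complex"
  assumes sf: "is_subfield F" and fa: "field_aut F \<sigma>"
begin

lemma add: "x \<in> F \<Longrightarrow> y \<in> F \<Longrightarrow> \<sigma> (x + y) = \<sigma> x + \<sigma> y"
  using fa unfolding field_aut_def by blast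
lemma mul: "x \<in> F \<Longrightarrow> y \<in> F \<Longrightarrow> \<sigma> (x * y) = \<sigma> x * \<sigma> y"
  using fa unfolding field_aut_def by blast
lemma one: "\<sigma> 1 = 1" using fa unfolding field_aut_def by blast
lemma zeroF: "0 \<in> F" using sf unfolding is_subfield_def by blast
lemma oneF: "1 \<in> F" using sf unfolding is_subfield_def by blast
lemma addF: "x \<in> F \<Longrightarrow> y \<in> F \<Longrightarrow> x + y \<in> F" using sf unfolding is_subfield_def by blast
lemma diffF: "x \<in> F \<Longrightarrow> y \<in> F \<Longrightarrow> x - y \<in> F" using sf unfolding is_subfield_def by blast
lemma mulF: "x \<in> F \<Longrightarrow> y \<in> F \<Longrightarrow> x * y \<in> F" using sf unfolding is_subfield_def by blast
lemma invF: "x \<in> F \<Longrightarrow> inverse x \<in> F" using sf unfolding is_subfield_def by blast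

lemma zero: "\<sigma> 0 = 0"
proof -
  have "\<sigma> (0 + 0) = \<sigma> 0 + \<sigma> 0" by (rule add[OF zeroF zeroF])
  then show ?thesis by simp
qed

lemma diff: "x \<in> F \<Longrightarrow> y \<in> F \<Longrightarrow> \<sigma> (x - y) = \<sigma> x - \<sigma> y"
proof -
  assume x: "x \<in> F" and y: "y \<in> F"
  have "\<sigma> ((x - y) + y) = \<sigma> (x - y) + \<sigma> y" by (rule add[OF diffF[OF x y] y])
  then show ?thesis by simp
qed

lemma nat: "\<sigma> (of_nat k) = of_nat k"
proof (induction k)
  case 0 then show ?case using zero by simp
next
  case (Suc k)
  have "\<sigma> (of_nat k + 1) = \<sigma> (of_nat k) + \<sigma> 1" by (rule add[OF subfield_nat[OF sf] oneF])
  then show ?case using Suc one by (simp add: add.commute)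
qed

lemma int: "\<sigma> (of_int k) = of_int k"
proof (cases "k \<ge> 0")
  case True
  then show ?thesis using nat[of "nat k"] by simp
next
  case False
  have "\<sigma> (0 - of_nat (nat (-k))) = \<sigma> 0 - \<sigma> (of_nat (nat (-k)))"
    by (rule diff[OF zeroF subfield_nat[OF sf]])
  then show ?thesis using False zero nat[of "nat (-k)"] by simp
qed

lemma inv: "x \<in> F \<Longrightarrow> \<sigma> (inverse x) = inverse (\<sigma> x)"
proof (cases "x = 0")
  case True then show ?thesis using zero by simp
next
  case False
  assume x: "x \<in> F"
  have "\<sigma> (x * inverse x) = \<sigma> x * \<sigma> (inverse x)" by (rule mul[OF x invF[OF x]])
  then have "\<sigma> x * \<sigma> (inverse x) = 1" using False one by simp
  then show ?thesis by (metis inverse_unique)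
qed

lemma divi: "x \<in> F \<Longrightarrow> y \<in> F \<Longrightarrow> \<sigma> (x / y) = \<sigma> x / \<sigma> y"
  unfolding divide_inverse using mul invF inv by simp

lemma ratnat: "\<sigma> (of_nat a / of_nat b) = of_nat a / of_nat b"
  using divi[OF subfield_nat[OF sf] subfield_nat[OF sf]] nat by simp

lemma poly_hom: "x \<in> F \<Longrightarrow> poly (of_int_poly p) x \<in> F \<and> \<sigma> (poly (of_int_poly p) x) = poly (of_int_poly p) (\<sigma> x)"
proof (induction p rule: pCons_induct)
  case 0 then show ?case using zeroF zero by simp
next
  case (pCons a p)
  have e: "of_int_poly (pCons a p) = pCons (of_int a :: complex) (of_int_poly p)"
    by (rule Polynomial.map_poly_pCons) simp
  have IH1: "poly (of_int_poly p) x \<in> F" and IH2: "\<sigma> (poly (of_int_poly p) x) = poly (of_int_poly p) (\<sigma> x)"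
    using pCons.IH[OF pCons.prems] by auto
  have m: "x * poly (of_int_poly p) x \<in> F" by (rule mulF[OF pCons.prems IH1])
  have "poly (of_int_poly (pCons a p)) x = of_int a + x * poly (of_int_poly p) x" using e by simp
  moreover have "of_int a + x * poly (of_int_poly p) x \<in> F" by (rule addF[OF subfield_int[OF sf] m])
  moreover have "\<sigma> (of_int a + x * poly (of_int_poly p) x) = of_int a + \<sigma> x * poly (of_int_poly p) (\<sigma> x)"
    using add[OF subfield_int[OF sf] m] mul[OF pCons.prems IH1] IH2 int by simp
  ultimately show ?case using e by simp
qed

end

lemma fauto_ext:
  assumes "field_aut (gen_field S) \<sigma>" "field_aut (gen_field S) \<tau>" and agree: "\<forall>s\<in>S. \<sigma> s = \<tau> s"
  shows "\<sigma> = \<tau>"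
proof -
  let ?F = "gen_field S"
  interpret s: fauto ?F \<sigma> using assms(1) gen_field_sub by unfold_locales
  interpret t: fauto ?F \<tau> using assms(2) gen_field_sub by unfold_locales
  let ?E = "{z\<in>?F. \<sigma> z = \<tau> z}"
  have "is_subfield ?E" unfolding is_subfield_def
    using s.zeroF s.oneF s.zero t.zero s.one t.one s.add t.add s.diff t.diff s.mul t.mul s.inv t.inv
      s.addF s.diffF s.mulF s.invF by auto
  moreover have "S \<subseteq> ?E" using agree gen_field_incl by blast
  ultimately have "?F \<subseteq> ?E" by (rule gen_field_min)
  moreover have "\<sigma> \<in> extensional ?F" "\<tau> \<in> extensional ?F" using assms(1,2) unfolding field_aut_def by auto
  ultimately show ?thesis
  proof (intro ext)
    fix z
    assume sub: "?F \<subseteq> ?E" and e1: "\<sigma> \<in> extensional ?F" and e2: "\<tau> \<in> extensional ?F"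
    show "\<sigma> z = \<tau> z"
    proof (cases "z \<in> ?F")
      case True then show ?thesis using sub by blast
    next
      case False then show ?thesis using e1 e2 unfolding extensional_def by simp
    qed
  qed
qed

lemma eig_bound:
  fixes A :: "complex mat"
  assumes A: "A \<in> carrier_mat n n"
    and w: "\<And>i j. i < n \<Longrightarrow> j < n \<Longrightarrow> A $$ (i,j) = of_real (w i j) \<and> w i j \<ge> 0"
    and rs: "\<And>i. i < n \<Longrightarrow> (\<Sum>j<n. w i j) \<le> c"
    and ev: "eigenvalue A l"
  shows "cmod l \<le> c"
proof -
  obtain v where v: "v \<in> carrier_vec n" "v \<noteq> 0\<^sub>v n" "A *\<^sub>v v = l \<cdot>\<^sub>v v"
    using ev A unfolding eigenvalue_def eigenvector_def by auto
  have dv: "dim_vec v = n" using v(1) by simp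
  have "\<exists>i<n. v $ i \<noteq> 0"
  proof (rule ccontr)
    assume "\<not> (\<exists>i<n. v $ i \<noteq> 0)"
    then have "v = 0\<^sub>v n" using dv by (intro eq_vecI) auto
    then show False using v(2) by simp
  qed
  then have n0: "n > 0" by auto
  let ?m = "Max ((\<lambda>i. cmod (v $ i)) ` {..<n})"
  have fin: "finite ((\<lambda>i. cmod (v $ i)) ` {..<n})" by simp
  have ne: "(\<lambda>i. cmod (v $ i)) ` {..<n} \<noteq> {}" using n0 by auto
  obtain i0 where i0: "i0 < n" "cmod (v $ i0) = ?m" using Max_in[OF fin ne] by auto
  have le: "\<And>j. j < n \<Longrightarrow> cmod (v $ j) \<le> ?m" using Max_ge[OF fin] by simp
  have mpos: "?m > 0"
  proof -
    obtain i where "i < n" "v $ i \<noteq> 0" using \<open>\<exists>i<n. v $ i \<noteq> 0\<close> by blast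
    then show ?thesis using le[of i] by (smt (verit) norm_le_zero_iff)
  qed
  have "(A *\<^sub>v v) $ i0 = (\<Sum>j<n. A $$ (i0, j) * v $ j)"
    using A i0(1) dv by (simp add: scalar_prod_def atLeast0LessThan)
  then have eq: "l * v $ i0 = (\<Sum>j<n. A $$ (i0, j) * v $ j)" using v(3) i0(1) dv by simp
  have "cmod l * ?m = cmod (\<Sum>j<n. A $$ (i0, j) * v $ j)" using eq i0(2) by (metis norm_mult)
  also have "\<dots> \<le> (\<Sum>j<n. cmod (A $$ (i0, j) * v $ j))" by (rule norm_sum)
  also have "\<dots> \<le> (\<Sum>j<n. w i0 j * ?m)"
  proof (rule sum_mono)
    fix j assume j: "j \<in> {..<n}"
    have "cmod (A $$ (i0, j) * v $ j) = w i0 j * cmod (v $ j)" using w[OF i0(1), of j] j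
      by (simp add: norm_mult)
    also have "\<dots> \<le> w i0 j * ?m" using w[OF i0(1), of j] j le[of j] by (simp add: mult_left_mono)
    finally show "cmod (A $$ (i0, j) * v $ j) \<le> w i0 j * ?m" .
  qed
  also have "\<dots> = (\<Sum>j<n. w i0 j) * ?m" by (simp add: sum_distrib_right)
  also have "\<dots> \<le> c * ?m" using rs[OF i0(1)] mpos by (simp add: mult_right_mono)
  finally show ?thesis using mpos by simp
qed



lemma (in grp) root_poly:
  assumes fin: "finite (carrier G)" and H: "subgroup H G" and psi: "linear_char G H \<psi>"
    and g: "g \<in> carrier G"
  shows "\<exists>P::int poly. P \<noteq> 0 \<and> poly (of_int_poly P) (of_nat (card H) * induced G H \<psi> g) = 0 \<and>
     (\<forall>z. poly (of_int_poly P) z = 0 \<longrightarrow> cmod z \<le> real (card (carrier G)))"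
proof -
  define y where "y x = x \<otimes> g \<otimes> inv x" for x
  define S where "S = {x\<in>carrier G. y x \<in> H}"
  define n where "n = card H"
  have Hc: "H \<subseteq> carrier G" by (rule subgroup.subset[OF H])
  have finH: "finite H" using fin Hc finite_subset by blast
  have finS: "finite S" using fin unfolding S_def by simp
  have Sc: "S \<subseteq> carrier G" unfolding S_def by blast
  have npos: "n > 0" unfolding n_def by (rule cardH_pos[OF fin H])
  obtain e where e: "bij_betw e {0..<n} H" using ex_bij_betw_nat_finite[OF finH] n_def by blast
  have eH: "\<And>i. i < n \<Longrightarrow> e i \<in> H" using e unfolding bij_betw_def by auto
  define K where "K i j = card {x. x \<in> S \<and> e i \<otimes> y x = e j}" for i j
  define Mz :: "int mat" where "Mz = mat n n (\<lambda>(i,j). int (K i j))"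
  define A :: "complex mat" where "A = of_int_hom.mat_hom Mz"
  have Mz: "Mz \<in> carrier_mat n n" unfolding Mz_def by simp
  have A: "A \<in> carrier_mat n n" unfolding A_def using Mz by simp
  have Aij: "\<And>i j. i < n \<Longrightarrow> j < n \<Longrightarrow> A $$ (i,j) = of_nat (K i j)"
    unfolding A_def Mz_def by simp
  have img: "\<And>i. i < n \<Longrightarrow> (\<lambda>x. e i \<otimes> y x) ` S \<subseteq> H"
    using eH subgroup.m_closed[OF H] unfolding S_def by blast
  have key: "\<And>i. i < n \<Longrightarrow> (\<Sum>j<n. of_nat (K i j) * \<psi> (e j)) = \<psi> (e i) * (\<Sum>x\<in>carrier G. \<psi> (y x))"
  proof -
    fix i assume i: "i < n"
    have "(\<Sum>j<n. of_nat (K i j) * \<psi> (e j)) = (\<Sum>j<n. \<Sum>x\<in>{x. x \<in> S \<and> e i \<otimes> y x = e j}. \<psi> (e i \<otimes> y x))"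
    proof (rule sum.cong[OF refl])
      fix j assume "j \<in> {..<n}"
      have "(\<Sum>x\<in>{x. x \<in> S \<and> e i \<otimes> y x = e j}. \<psi> (e i \<otimes> y x)) = (\<Sum>x\<in>{x. x \<in> S \<and> e i \<otimes> y x = e j}. \<psi> (e j))"
        by (rule sum.cong) auto
      also have "\<dots> = of_nat (K i j) * \<psi> (e j)" unfolding K_def by (rule sum_constant)
      finally show "of_nat (K i j) * \<psi> (e j) = (\<Sum>x\<in>{x. x \<in> S \<and> e i \<otimes> y x = e j}. \<psi> (e i \<otimes> y x))" by (rule sym)
    qed
    also have "\<dots> = (\<Sum>z\<in>H. \<Sum>x\<in>{x. x \<in> S \<and> e i \<otimes> y x = z}. \<psi> (e i \<otimes> y x))"
      using sum.reindex_bij_betw[OF e, of "\<lambda>z. \<Sum>x\<in>{x. x \<in> S \<and> e i \<otimes> y x = z}. \<psi> (e i \<otimes> y x)"]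
      by (simp add: atLeast0LessThan)
    also have "\<dots> = (\<Sum>x\<in>S. \<psi> (e i \<otimes> y x))"
      by (rule sum.group[OF finS finH img[OF i]])
    also have "\<dots> = (\<Sum>x\<in>S. \<psi> (e i) * \<psi> (y x))"
    proof (rule sum.cong[OF refl])
      fix x assume "x \<in> S"
      then have "y x \<in> H" unfolding S_def by simp
      then show "\<psi> (e i \<otimes> y x) = \<psi> (e i) * \<psi> (y x)" using psi eH[OF i] unfolding linear_char_def by blast
    qed
    also have "\<dots> = \<psi> (e i) * (\<Sum>x\<in>S. \<psi> (y x))" by (simp add: sum_distrib_left)
    also have "(\<Sum>x\<in>S. \<psi> (y x)) = (\<Sum>x\<in>carrier G. \<psi> (y x))"
    proof -
      have "(\<Sum>x\<in>S. \<psi> (y x)) = (\<Sum>x\<in>carrier G. if y x \<in> H then \<psi> (y x) else 0)"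
        unfolding S_def by (rule sum.inter_filter[OF fin])
      also have "\<dots> = (\<Sum>x\<in>carrier G. \<psi> (y x))"
        using psi unfolding linear_char_def by (intro sum.cong) auto
      finally show ?thesis .
    qed
    finally show "(\<Sum>j<n. of_nat (K i j) * \<psi> (e j)) = \<psi> (e i) * (\<Sum>x\<in>carrier G. \<psi> (y x))" .
  qed
  have rowsum: "\<And>i. i < n \<Longrightarrow> (\<Sum>j<n. K i j) = card S"
  proof -
    fix i assume i: "i < n"
    have "(\<Sum>j<n. K i j) = (\<Sum>z\<in>H. card {x. x \<in> S \<and> e i \<otimes> y x = z})"
      unfolding K_def using sum.reindex_bij_betw[OF e, of "\<lambda>z. card {x. x \<in> S \<and> e i \<otimes> y x = z}"]
      by (simp add: atLeast0LessThan)
    also have "\<dots> = (\<Sum>z\<in>H. \<Sum>x\<in>{x. x \<in> S \<and> e i \<otimes> y x = z}. 1)" by simp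
    also have "\<dots> = (\<Sum>x\<in>S. 1)" by (rule sum.group[OF finS finH img[OF i]])
    finally show "(\<Sum>j<n. K i j) = card S" by simp
  qed
  define \<beta> where "\<beta> = of_nat (card H) * induced G H \<psi> g"
  have beta: "\<beta> = (\<Sum>x\<in>carrier G. \<psi> (y x))"
    unfolding \<beta>_def y_def by (rule induced_eq[OF g cardH_pos[OF fin H]])
  have ev: "eigenvalue A \<beta>"
    unfolding eigenvalue_def eigenvector_def
  proof (intro exI conjI)
    let ?v = "vec n (\<lambda>i. \<psi> (e i))"
    show "?v \<in> carrier_vec (dim_row A)" using A by simp
    have "?v $ 0 \<noteq> 0" using npos eH[OF npos] psi unfolding linear_char_def by simp
    then show "?v \<noteq> 0\<^sub>v (dim_row A)"
    proof (intro notI)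
      assume nz: "?v $ 0 \<noteq> 0" and "?v = 0\<^sub>v (dim_row A)"
      then have "?v $ 0 = 0\<^sub>v n $ 0" using A by simp
      then have "?v $ 0 = 0" using npos by simp
      then show False using nz by simp
    qed
    show "A *\<^sub>v ?v = \<beta> \<cdot>\<^sub>v ?v"
    proof (rule eq_vecI)
      show "dim_vec (A *\<^sub>v ?v) = dim_vec (\<beta> \<cdot>\<^sub>v ?v)" using A by simp
      fix i assume "i < dim_vec (\<beta> \<cdot>\<^sub>v ?v)"
      then have i: "i < n" by simp
      have "(A *\<^sub>v ?v) $ i = (\<Sum>j<n. A $$ (i, j) * ?v $ j)"
        using A i by (simp add: scalar_prod_def atLeast0LessThan)
      also have "\<dots> = (\<Sum>j<n. of_nat (K i j) * \<psi> (e j))"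
        using Aij[OF i] by (intro sum.cong) auto
      also have "\<dots> = \<psi> (e i) * \<beta>" using key[OF i] beta by simp
      finally show "(A *\<^sub>v ?v) $ i = (\<beta> \<cdot>\<^sub>v ?v) $ i" using i by (simp add: mult.commute)
    qed
  qed
  define P where "P = char_poly Mz"
  have cp: "char_poly A = of_int_poly P" unfolding A_def P_def by (rule of_int_hom.char_poly_hom[OF Mz])
  have "coeff P n = 1" unfolding P_def using degree_monic_char_poly[OF Mz] by simp
  then have P0: "P \<noteq> 0" by auto
  have root: "poly (of_int_poly P) \<beta> = 0" using ev eigenvalue_root_char_poly[OF A] cp by simp
  have bound: "\<forall>z. poly (of_int_poly P) z = 0 \<longrightarrow> cmod z \<le> real (card (carrier G))"
  proof (intro allI impI)
    fix z :: complex assume "poly (of_int_poly P) z = 0"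
    then have evz: "eigenvalue A z" using eigenvalue_root_char_poly[OF A] cp by simp
    show "cmod z \<le> real (card (carrier G))"
    proof (rule eig_bound[OF A _ _ evz])
      fix i j assume "i < n" "j < n"
      then show "A $$ (i, j) = of_real (real (K i j)) \<and> real (K i j) \<ge> 0" using Aij by simp
    next
      fix i assume i: "i < n"
      have "(\<Sum>j<n. real (K i j)) = real (card S)" using rowsum[OF i] by (metis of_nat_sum)
      also have "\<dots> \<le> real (card (carrier G))" using card_mono[OF fin Sc] by simp
      finally show "(\<Sum>j<n. real (K i j)) \<le> real (card (carrier G))" .
    qed
  qed
  show ?thesis using P0 root bound unfolding \<beta>_def by blast
qed


lemma (in grp) gal_props:
  assumes fin: "finite (carrier G)" and H: "subgroup H G" and psi: "linear_char G H \<psi>"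
  shows "finite (char_gal G (induced G H \<psi>))"
    and "restrict id (gen_field (induced G H \<psi> ` carrier G)) \<in> char_gal G (induced G H \<psi>)"
    and "\<And>\<sigma> g. \<sigma> \<in> char_gal G (induced G H \<psi>) \<Longrightarrow> g \<in> carrier G \<Longrightarrow>
           cmod (\<sigma> (induced G H \<psi> g)) \<le> real (card (carrier G)) / real (card H)"
proof -
  define \<chi> where "\<chi> = induced G H \<psi>"
  define F where "F = gen_field (\<chi> ` carrier G)"
  have sf: "is_subfield F" unfolding F_def by (rule gen_field_sub)
  have chiF: "\<And>g. g \<in> carrier G \<Longrightarrow> \<chi> g \<in> F" unfolding F_def using gen_field_incl by blast
  define c :: complex where "c = of_nat (card H)"
  have cpos: "card H > 0" by (rule cardH_pos[OF fin H])
  have c0: "c \<noteq> 0" unfolding c_def using cpos by simp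
  have cF: "c \<in> F" unfolding c_def by (rule subfield_nat[OF sf])
  have "\<forall>g\<in>carrier G. \<exists>P::int poly. P \<noteq> 0 \<and> poly (of_int_poly P) (c * \<chi> g) = 0 \<and>
     (\<forall>z. poly (of_int_poly P) z = 0 \<longrightarrow> cmod z \<le> real (card (carrier G)))"
    using root_poly[OF fin H psi] unfolding c_def \<chi>_def by blast
  then obtain PP where PP: "\<And>g. g \<in> carrier G \<Longrightarrow> PP g \<noteq> 0 \<and> poly (of_int_poly (PP g)) (c * \<chi> g) = 0 \<and>
     (\<forall>z. poly (of_int_poly (PP g)) z = 0 \<longrightarrow> cmod z \<le> real (card (carrier G)))"
    by metis
  have groot: "\<And>\<sigma> g. \<sigma> \<in> char_gal G \<chi> \<Longrightarrow> g \<in> carrier G \<Longrightarrow> poly (of_int_poly (PP g)) (c * \<sigma> (\<chi> g)) = 0"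
  proof -
    fix \<sigma> g assume s: "\<sigma> \<in> char_gal G \<chi>" and g: "g \<in> carrier G"
    interpret fauto F \<sigma> using sf s unfolding char_gal_def F_def by unfold_locales auto
    have b: "c * \<chi> g \<in> F" by (rule mulF[OF cF chiF[OF g]])
    have "\<sigma> (c * \<chi> g) = c * \<sigma> (\<chi> g)" using mul[OF cF chiF[OF g]] nat unfolding c_def by simp
    moreover have "\<sigma> (poly (of_int_poly (PP g)) (c * \<chi> g)) = poly (of_int_poly (PP g)) (\<sigma> (c * \<chi> g))"
      using poly_hom[OF b] by blast
    ultimately show "poly (of_int_poly (PP g)) (c * \<sigma> (\<chi> g)) = 0" using PP[OF g] zero by simp
  qed
  show bd: "\<And>\<sigma> g. \<sigma> \<in> char_gal G (induced G H \<psi>) \<Longrightarrow> g \<in> carrier G \<Longrightarrow>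
           cmod (\<sigma> (induced G H \<psi> g)) \<le> real (card (carrier G)) / real (card H)"
  proof -
    fix \<sigma> g assume s: "\<sigma> \<in> char_gal G (induced G H \<psi>)" and g: "g \<in> carrier G"
    have "cmod (c * \<sigma> (\<chi> g)) \<le> real (card (carrier G))"
      using PP[OF g] groot[OF s[folded \<chi>_def] g] by blast
    then have "real (card H) * cmod (\<sigma> (\<chi> g)) \<le> real (card (carrier G))"
      unfolding c_def by (simp add: norm_mult)
    then show "cmod (\<sigma> (induced G H \<psi> g)) \<le> real (card (carrier G)) / real (card H)"
      unfolding \<chi>_def using cpos by (simp add: field_simps)
  qed
  define R where "R g = {z. poly (of_int_poly (PP g)) (c * z) = 0}" for g
  have finR: "\<And>g. g \<in> carrier G \<Longrightarrow> finite (R g)"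
  proof -
    fix g assume g: "g \<in> carrier G"
    have "of_int_poly (PP g) \<noteq> (0 :: complex poly)" using PP[OF g] by (simp add: map_poly_eq_0_iff)
    then have f: "finite {w. poly (of_int_poly (PP g)) w = (0::complex)}" by (rule poly_roots_finite)
    have "R g \<subseteq> (\<lambda>w. w / c) ` {w. poly (of_int_poly (PP g)) w = 0}"
    proof
      fix z assume "z \<in> R g"
      then have "c * z \<in> {w. poly (of_int_poly (PP g)) w = 0}" unfolding R_def by simp
      moreover have "z = (c * z) / c" using c0 by simp
      ultimately show "z \<in> (\<lambda>w. w / c) ` {w. poly (of_int_poly (PP g)) w = 0}" by blast
    qed
    then show "finite (R g)" using f finite_subset by blast
  qed
  define \<Phi> where "\<Phi> \<sigma> = restrict (\<lambda>g. \<sigma> (\<chi> g)) (carrier G)" for \<sigma> :: "complex \<Rightarrow> complex"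
  have "inj_on \<Phi> (char_gal G \<chi>)"
  proof (rule inj_onI)
    fix \<sigma> \<tau> assume s: "\<sigma> \<in> char_gal G \<chi>" and t: "\<tau> \<in> char_gal G \<chi>" and e: "\<Phi> \<sigma> = \<Phi> \<tau>"
    have "\<forall>x\<in>\<chi> ` carrier G. \<sigma> x = \<tau> x"
    proof
      fix x assume "x \<in> \<chi> ` carrier G"
      then obtain g where g: "g \<in> carrier G" "x = \<chi> g" by blast
      have "\<Phi> \<sigma> g = \<Phi> \<tau> g" using e by simp
      then show "\<sigma> x = \<tau> x" using g unfolding \<Phi>_def by simp
    qed
    then show "\<sigma> = \<tau>" using fauto_ext s t unfolding char_gal_def by blast
  qed
  moreover have "\<Phi> ` char_gal G \<chi> \<subseteq> PiE (carrier G) R"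
  proof
    fix f assume "f \<in> \<Phi> ` char_gal G \<chi>"
    then obtain \<sigma> where s: "\<sigma> \<in> char_gal G \<chi>" and f: "f = \<Phi> \<sigma>" by blast
    show "f \<in> PiE (carrier G) R" unfolding f \<Phi>_def R_def using groot[OF s] by auto
  qed
  moreover have "finite (PiE (carrier G) R)" using fin finR by (rule finite_PiE)
  ultimately show "finite (char_gal G (induced G H \<psi>))" unfolding \<chi>_def by (rule inj_on_finite)
  have "field_aut F (restrict id F)" unfolding field_aut_def
  proof (intro conjI ballI)
    show "restrict id F \<in> extensional F" by simp
    have "bij_betw id F F" by simp
    then show "bij_betw (restrict id F) F F" by (rule bij_betw_cong[THEN iffD1, rotated]) simp
    show "restrict id F 1 = 1" using sf unfolding is_subfield_def by simp
  next
    fix x y assume x: "x \<in> F" and y: "y \<in> F"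
    have "x + y \<in> F" "x * y \<in> F" using sf x y unfolding is_subfield_def by auto
    then show "restrict id F (x + y) = restrict id F x + restrict id F y"
      and "restrict id F (x * y) = restrict id F x * restrict id F y" using x y by auto
  qed
  then show "restrict id (gen_field (induced G H \<psi> ` carrier G)) \<in> char_gal G (induced G H \<psi>)"
    unfolding char_gal_def F_def \<chi>_def by simp
qed


lemma (in grp) ker_eQ:
  assumes fin: "finite (carrier G)" and H: "subgroup H G" and psi: "linear_char G H \<psi>"
  shows "char_ker G (induced G H \<psi>) = {g\<in>carrier G. eQ G (induced G H \<psi>) (inv g) = eQ G (induced G H \<psi>) \<one>}"
proof -
  define \<chi> where "\<chi> = induced G H \<psi>"
  define F where "F = gen_field (\<chi> ` carrier G)"
  define Gal where "Gal = char_gal G \<chi>"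
  have sf: "is_subfield F" unfolding F_def by (rule gen_field_sub)
  have chiF: "\<And>g. g \<in> carrier G \<Longrightarrow> \<chi> g \<in> F" unfolding F_def using gen_field_incl by blast
  have finGal: "finite Gal" unfolding Gal_def \<chi>_def by (rule gal_props(1)[OF fin H psi])
  have idGal: "restrict id F \<in> Gal" unfolding Gal_def F_def \<chi>_def by (rule gal_props(2)[OF fin H psi])
  have bd: "\<And>\<sigma> g. \<sigma> \<in> Gal \<Longrightarrow> g \<in> carrier G \<Longrightarrow> cmod (\<sigma> (\<chi> g)) \<le> real (card (carrier G)) / real (card H)"
    unfolding Gal_def \<chi>_def by (rule gal_props(3)[OF fin H psi])
  have cpos: "card H > 0" by (rule cardH_pos[OF fin H])
  have Gpos: "card (carrier G) > 0" using fin one_closed by (metis card_gt_0_iff empty_iff)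
  define dr where "dr = real (card (carrier G)) / real (card H)"
  have chi1: "\<chi> \<one> = of_real dr"
  proof -
    have "of_nat (card H) * \<chi> \<one> = of_nat (card (carrier G))" unfolding \<chi>_def by (rule induced_one[OF fin H psi])
    then show ?thesis unfolding dr_def using cpos by (simp add: field_simps)
  qed
  have chi1': "\<chi> \<one> = of_nat (card (carrier G)) / of_nat (card H)" using chi1 unfolding dr_def by simp
  have fix1: "\<And>\<sigma>. \<sigma> \<in> Gal \<Longrightarrow> \<sigma> (\<chi> \<one>) = \<chi> \<one>"
  proof -
    fix \<sigma> assume s: "\<sigma> \<in> Gal"
    interpret fauto F \<sigma> using sf s unfolding Gal_def char_gal_def F_def by unfold_locales auto
    show "\<sigma> (\<chi> \<one>) = \<chi> \<one>" unfolding chi1' by (rule ratnat)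
  qed
  define T where "T g = (\<Sum>\<sigma>\<in>Gal. \<sigma> (\<chi> g))" for g
  define k where "k = \<chi> \<one> / of_nat (card (carrier G))"
  have k0: "k \<noteq> 0" unfolding k_def chi1' using cpos Gpos by simp
  have eQinv: "\<And>g. g \<in> carrier G \<Longrightarrow> eQ G \<chi> (inv g) = k * T g"
    unfolding eQ_def k_def T_def Gal_def by simp
  have eQ1: "eQ G \<chi> \<one> = k * (of_nat (card Gal) * of_real dr)"
  proof -
    have "eQ G \<chi> \<one> = k * T \<one>" using eQinv[OF one_closed] by simp
    also have "T \<one> = (\<Sum>\<sigma>\<in>Gal. \<chi> \<one>)" unfolding T_def using fix1 by (intro sum.cong) auto
    finally show ?thesis using chi1 by simp
  qed
  have "char_ker G \<chi> = {g\<in>carrier G. eQ G \<chi> (inv g) = eQ G \<chi> \<one>}"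
  proof (intro equalityI subsetI)
    fix g assume "g \<in> char_ker G \<chi>"
    then have g: "g \<in> carrier G" and e: "\<chi> g = \<chi> \<one>" unfolding char_ker_def by auto
    have "T g = (\<Sum>\<sigma>\<in>Gal. \<chi> \<one>)" unfolding T_def using fix1 e by (intro sum.cong) auto
    then have "eQ G \<chi> (inv g) = eQ G \<chi> \<one>" using eQinv[OF g] eQ1 chi1 by simp
    then show "g \<in> {g\<in>carrier G. eQ G \<chi> (inv g) = eQ G \<chi> \<one>}" using g by simp
  next
    fix g assume "g \<in> {g\<in>carrier G. eQ G \<chi> (inv g) = eQ G \<chi> \<one>}"
    then have g: "g \<in> carrier G" and e: "eQ G \<chi> (inv g) = eQ G \<chi> \<one>" by auto
    have "k * T g = k * (of_nat (card Gal) * of_real dr)" using e eQinv[OF g] eQ1 by simp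
    then have "T g = of_nat (card Gal) * of_real dr" using k0 by simp
    then have "\<forall>\<sigma>\<in>Gal. \<sigma> (\<chi> g) = of_real dr"
      using sum_norm_eq[OF finGal, of "\<lambda>\<sigma>. \<sigma> (\<chi> g)" dr] bd[OF _ g] unfolding T_def dr_def by blast
    then have "restrict id F (\<chi> g) = of_real dr" using idGal by blast
    then have "\<chi> g = \<chi> \<one>" using chiF[OF g] chi1 by simp
    then show "g \<in> char_ker G \<chi>" using g unfolding char_ker_def by simp
  qed
  then show ?thesis unfolding \<chi>_def .
qed

theorem lemma4:
  fixes G :: "'a monoid"
    and Acal :: "'a triple \<Rightarrow> 'a set"
    and Rep :: "'a triple \<Rightarrow> ('a \<Rightarrow> complex) set"
  assumes "group G" and "finite (carrier G)" and "class_C G"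
    and "normal N G" and "normal N' G" and "N \<noteq> N'"
    and "Acal_ok G Acal" and "Rep_ok G Acal Rep"
    and "(H, H, \<theta>) \<in> L_set G Acal Rep N"
    and "(H', H', \<theta>') \<in> L_set G Acal Rep N'"
  shows "shoda_idem G H (lin_ker H \<theta>) \<inter> shoda_idem G H' (lin_ker H' \<theta>') = {}"
proof (rule ccontr)
  have gG: "grp G" unfolding grp_def using assms(1) .
  assume "shoda_idem G H (lin_ker H \<theta>) \<inter> shoda_idem G H' (lin_ker H' \<theta>') \<noteq> {}"
  then obtain x where x1: "x \<in> shoda_idem G H (lin_ker H \<theta>)" and x2: "x \<in> shoda_idem G H' (lin_ker H' \<theta>')" by blast
  have key: "char_ker G (induced G K \<phi>) = M"
    if v: "(K, K, tt) \<in> L_set G Acal Rep M" and M: "normal M G" and phi: "linear_char G K \<phi>"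
      and lk: "lin_ker K \<phi> = lin_ker K tt" for K M tt \<phi>
  proof -
    have vv: "(K, K, tt) \<in> graph_vertices G Acal Rep M" using v unfolding L_set_def by simp
    have inv: "lin_triple G (K, K, tt) \<and> char_ker G (induced G K tt) = M"
      using grp.vert_inv[OF gG assms(2) M assms(7,8) vv] by simp
    then have K: "subgroup K G" and th: "linear_char G K tt" unfolding lin_triple_def by auto
    have "char_ker G (induced G K \<phi>) = {g\<in>carrier G. \<forall>x\<in>carrier G. x \<otimes>\<^bsub>G\<^esub> g \<otimes>\<^bsub>G\<^esub> inv\<^bsub>G\<^esub> x \<in> lin_ker K \<phi>}"
      by (rule grp.ker_core[OF gG assms(2) K phi])
    also have "\<dots> = char_ker G (induced G K tt)"
      using grp.ker_core[OF gG assms(2) K th] lk by simp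
    finally show ?thesis using inv by simp
  qed
  obtain \<psi> where p1: "linear_char G H \<psi>" "lin_ker H \<psi> = lin_ker H \<theta>" and xe: "x = eQ G (induced G H \<psi>)"
    using x1 unfolding shoda_idem_def by blast
  obtain \<psi>' where p2: "linear_char G H' \<psi>'" "lin_ker H' \<psi>' = lin_ker H' \<theta>'" and xe': "x = eQ G (induced G H' \<psi>')"
    using x2 unfolding shoda_idem_def by blast
  have H: "subgroup H G"
    using grp.vert_inv[OF gG assms(2,4,7,8)] assms(9) unfolding L_set_def lin_triple_def by auto
  have H': "subgroup H' G"
    using grp.vert_inv[OF gG assms(2,5,7,8)] assms(10) unfolding L_set_def lin_triple_def by auto
  have "N = char_ker G (induced G H \<psi>)" using key[OF assms(9,4) p1] by simp
  also have "\<dots> = {g\<in>carrier G. x (inv\<^bsub>G\<^esub> g) = x \<one>\<^bsub>G\<^esub>}" using grp.ker_eQ[OF gG assms(2) H p1(1)] xe by simp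
  also have "\<dots> = char_ker G (induced G H' \<psi>')" using grp.ker_eQ[OF gG assms(2) H' p2(1)] xe' by simp
  also have "\<dots> = N'" using key[OF assms(10,5) p2] by simp
  finally show False using assms(6) by simp
qed


end
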